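(* Let $3\le n\le k$ be integers and let $X$ be the discrete-time Markov chain on $\mathbb{N}^{n-1}$ described in the context. If $X$ is stable and $\mathbf{Q}$ is a random vector distributed according to its stationary distribution, then $$\mathbb{E}[|\mathbf{Q}|]=\frac{k(n-1)}{2(k-n)}.$$
   Context: $\mathbb{N}=\{0,1,2,\dots\}$; for $\mathbf{x}\in\mathbb{N}^{n-1}$, $|\mathbf{x}|=x_1+\dots+x_{n-1}$. $\mathbf{0}$, $\mathbf{1}$ are the all-zero and all-one vectors of dimension $n-1$, $\mathbf{e}_l$ the $l$-th unit vector. For $j=0,\dots,n-1$, $R_j$ is the set of $\mathbf{x}\in\mathbb{N}^{n-1}$ with exactly $j$ zero entries. $X$ is the Markov chain on $\mathbb{N}^{n-1}$ with nonzero transition probabilities: from $\mathbf{x}\in R_0$, to $\mathbf{x}-\mathbf{1}$ w.p. $\frac{k-(n-1)}{k}$ and to $\mathbf{x}+\mathbf{e}_l$ w.p. $\frac1k$ ($l=1,\dots,n-1$); from $\mathbf{x}\in R_j$, $1\le j\le n-2$, to $\mathbf{x}+\mathbf{e}_l$ w.p. $\frac{k-(n-1-j)}{kj}$ if $x_l=0$ and w.p. $\frac1k$ if $x_l\ge1$; from $\mathbf{0}$ to $\mathbf{e}_l$ w.p. $\frac1{n-1}$. Stable means positive recurrent. *)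

theory Defs
  imports "HOL-Analysis.Analysis"
begin

text \<open>States: vectors in N^(n-1), represented as functions nat => nat whose
  coordinates 0,...,n-2 are the entries x_1,...,x_(n-1) and which vanish elsewhere.\<close>

definition states :: "nat \<Rightarrow> (nat \<Rightarrow> nat) set" where
  "states n = {x. \<forall>i. n - 1 \<le> i \<longrightarrow> x i = 0}"

definition norm1 :: "nat \<Rightarrow> (nat \<Rightarrow> nat) \<Rightarrow> nat" where
  "norm1 n x = (\<Sum>i<n - 1. x i)"

text \<open>number of zero entries (x belongs to R_j with j = nzeros n x)\<close>
definition nzeros :: "nat \<Rightarrow> (nat \<Rightarrow> nat) \<Rightarrow> nat" where
  "nzeros n x = card {i. i < n - 1 \<and> x i = 0}"

text \<open>x - 1 (used only for x in R_0)\<close>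
definition dec_all :: "nat \<Rightarrow> (nat \<Rightarrow> nat) \<Rightarrow> (nat \<Rightarrow> nat)" where
  "dec_all n x = (\<lambda>i. if i < n - 1 then x i - 1 else 0)"

definition inc :: "(nat \<Rightarrow> nat) \<Rightarrow> nat \<Rightarrow> (nat \<Rightarrow> nat)" where
  "inc x l = x(l := Suc (x l))"

definition trans :: "nat \<Rightarrow> nat \<Rightarrow> (nat \<Rightarrow> nat) \<Rightarrow> (nat \<Rightarrow> nat) \<Rightarrow> real" where
  "trans n k x y =
    (let j = nzeros n x in
     if j = 0 then
       (if y = dec_all n x then (real k - real (n - 1)) / real k else 0)
       + (\<Sum>l<n - 1. if y = inc x l then 1 / real k else 0)
     else
       (\<Sum>l<n - 1. if y = inc x l then
           (if x l = 0 then (real k - real (n - 1 - j)) / (real k * real j) else 1 / real k)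
         else 0))"

fun first_passage :: "nat \<Rightarrow> nat \<Rightarrow> nat \<Rightarrow> (nat \<Rightarrow> nat) \<Rightarrow> (nat \<Rightarrow> nat) \<Rightarrow> real" where
  "first_passage n k 0 x y = 0"
| "first_passage n k (Suc 0) x y = trans n k x y"
| "first_passage n k (Suc (Suc m)) x y =
     infsum (\<lambda>z. trans n k x z * first_passage n k (Suc m) z y) (states n - {y})"

definition pos_recurrent_state :: "nat \<Rightarrow> nat \<Rightarrow> (nat \<Rightarrow> nat) \<Rightarrow> bool" where
  "pos_recurrent_state n k x \<longleftrightarrow>
     ((\<lambda>m. first_passage n k m x x) sums 1) \<and>
     summable (\<lambda>m. real m * first_passage n k m x x)"

definition stable :: "nat \<Rightarrow> nat \<Rightarrow> bool" where
  "stable n k \<longleftrightarrow> (\<forall>x \<in> states n. pos_recurrent_state n k x)"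

definition stationary :: "nat \<Rightarrow> nat \<Rightarrow> ((nat \<Rightarrow> nat) \<Rightarrow> real) \<Rightarrow> bool" where
  "stationary n k \<pi> \<longleftrightarrow>
     (\<forall>x \<in> states n. 0 \<le> \<pi> x) \<and>
     (\<pi> has_sum 1) (states n) \<and>
     (\<forall>y \<in> states n. ((\<lambda>x. \<pi> x * trans n k x y) has_sum \<pi> y) (states n))"

end

theory Submission
  imports Defs
begin


definition R0 :: "nat \<Rightarrow> (nat \<Rightarrow> nat) \<Rightarrow> bool" where
  "R0 n x \<longleftrightarrow> nzeros n x = 0"
definition pp :: "nat \<Rightarrow> nat \<Rightarrow> real" where
  "pp n k = (real k - real (n - 1)) / real k"
definition ww :: "nat \<Rightarrow> nat \<Rightarrow> (nat \<Rightarrow> nat) \<Rightarrow> nat \<Rightarrow> real" where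
  "ww n k x l = (if x l = 0 then (real k - real (n - 1 - nzeros n x)) / (real k * real (nzeros n x))
                 else 1 / real k)"
definition succs :: "nat \<Rightarrow> (nat \<Rightarrow> nat) \<Rightarrow> (nat \<Rightarrow> nat) set" where
  "succs n x = insert (dec_all n x) (inc x ` {..<n - 1})"
definition PP :: "nat \<Rightarrow> nat \<Rightarrow> ((nat \<Rightarrow> nat) \<Rightarrow> real) \<Rightarrow> (nat \<Rightarrow> nat) \<Rightarrow> real" where
  "PP n k H x = (\<Sum>y\<in>succs n x. trans n k x y * H y)"
definition sn :: "nat \<Rightarrow> (nat \<Rightarrow> nat) \<Rightarrow> real" where
  "sn n x = real (norm1 n x)"
definition Qn :: "nat \<Rightarrow> (nat \<Rightarrow> nat) \<Rightarrow> real" where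
  "Qn n x = (\<Sum>i<n - 1. real (x i) ^ 2)"

lemma R0_iff: "R0 n x \<longleftrightarrow> (\<forall>i<n - 1. x i \<noteq> 0)"
  unfolding R0_def nzeros_def by (subst card_0_eq) auto

lemma nzeros_le: "nzeros n x \<le> n - 1"
proof -
  have "{i. i < n - 1 \<and> x i = 0} \<subseteq> {..<n-1}" by auto
  then show ?thesis unfolding nzeros_def by (metis card_lessThan card_mono finite_lessThan)
qed

lemma trans_alt: "trans n k x y =
   (if R0 n x \<and> y = dec_all n x then pp n k else 0) + (\<Sum>l<n - 1. if y = inc x l then ww n k x l else 0)"
proof (cases "R0 n x")
  case True
  then have "\<forall>l<n-1. x l \<noteq> 0" by (simp add: R0_iff)
  then have "(\<Sum>l<n - 1. if y = inc x l then ww n k x l else 0) = (\<Sum>l<n - 1. if y = inc x l then 1 / real k else 0)"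
    by (intro sum.cong) (auto simp: ww_def)
  with True show ?thesis unfolding trans_def Let_def R0_def pp_def by auto
next
  case False
  then show ?thesis unfolding trans_def Let_def R0_def ww_def
    by (auto intro!: sum.cong)
qed

lemma sum_trans: "finite A \<Longrightarrow> (\<Sum>y\<in>A. trans n k x y * H y) =
   (if R0 n x \<and> dec_all n x \<in> A then pp n k * H (dec_all n x) else 0)
   + (\<Sum>l<n - 1. if inc x l \<in> A then ww n k x l * H (inc x l) else 0)"
proof -
  assume fin: "finite A"
  have "(\<Sum>y\<in>A. trans n k x y * H y) = (\<Sum>y\<in>A. (if R0 n x \<and> y = dec_all n x then pp n k else 0) * H y)
     + (\<Sum>y\<in>A. \<Sum>l<n - 1. (if y = inc x l then ww n k x l else 0) * H y)"
    by (simp add: trans_alt distrib_right sum.distrib sum_distrib_right)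
  also have "(\<Sum>y\<in>A. (if R0 n x \<and> y = dec_all n x then pp n k else 0) * H y)
      = (if R0 n x \<and> dec_all n x \<in> A then pp n k * H (dec_all n x) else 0)"
  proof -
    have "(\<Sum>y\<in>A. (if R0 n x \<and> y = dec_all n x then pp n k else 0) * H y)
       = (\<Sum>y\<in>A. if y = dec_all n x then (if R0 n x then pp n k * H y else 0) else 0)"
      by (intro sum.cong) auto
    then show ?thesis using fin by (simp add: sum.delta')
  qed
  also have "(\<Sum>y\<in>A. \<Sum>l<n - 1. (if y = inc x l then ww n k x l else 0) * H y)
      = (\<Sum>l<n - 1. \<Sum>y\<in>A. (if y = inc x l then ww n k x l * H y else 0))"
    by (subst sum.swap) (auto intro!: sum.cong)
  also have "\<dots> = (\<Sum>l<n - 1. if inc x l \<in> A then ww n k x l * H (inc x l) else 0)"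
    using fin by (intro sum.cong refl) (simp add: sum.delta')
  finally show ?thesis .
qed

lemma trans_outside: "y \<notin> succs n x \<Longrightarrow> trans n k x y = 0"
  unfolding trans_alt succs_def by (auto intro!: sum.neutral)

lemma finite_succs[simp]: "finite (succs n x)"
  unfolding succs_def by auto

lemma PP_eq: "PP n k H x = (if R0 n x then pp n k * H (dec_all n x) else 0)
   + (\<Sum>l<n - 1. ww n k x l * H (inc x l))"
  unfolding PP_def by (subst sum_trans) (auto simp: succs_def)

lemma sum_ww: assumes "n - 1 < k"
  shows "(\<Sum>l<n - 1. ww n k x l) = 1 - (if R0 n x then pp n k else 0)"
proof -
  define Z where "Z = {i. i < n - 1 \<and> x i = 0}"
  have Zs: "Z \<subseteq> {..<n-1}" and fZ: "finite Z" unfolding Z_def by auto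
  have cZ: "card Z = nzeros n x" unfolding Z_def nzeros_def ..
  have kpos: "real k > 0" using assms by simp
  have "(\<Sum>l<n - 1. ww n k x l) = (\<Sum>l\<in>Z. ww n k x l) + (\<Sum>l\<in>{..<n-1} - Z. ww n k x l)"
    using Zs by (metis finite_lessThan sum.subset_diff add.commute)
  also have "(\<Sum>l\<in>Z. ww n k x l) = real (card Z) * ((real k - real (n - 1 - nzeros n x)) / (real k * real (nzeros n x)))"
    by (simp add: ww_def Z_def)
  also have "(\<Sum>l\<in>{..<n-1} - Z. ww n k x l) = (\<Sum>l\<in>{..<n-1} - Z. 1 / real k)"
    by (intro sum.cong) (auto simp: ww_def Z_def)
  also have "\<dots> = real (card ({..<n-1} - Z)) * (1 / real k)" by simp
  also have "card ({..<n-1} - Z) = n - 1 - nzeros n x"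
    using Zs cZ by (simp add: card_Diff_subset fZ)
  finally have eq: "(\<Sum>l<n - 1. ww n k x l) = real (nzeros n x) * ((real k - real (n - 1 - nzeros n x)) / (real k * real (nzeros n x)))
        + real (n - 1 - nzeros n x) * (1 / real k)" using cZ by simp
  show ?thesis
  proof (cases "R0 n x")
    case True
    then have "nzeros n x = 0" by (simp add: R0_def)
    with eq kpos show ?thesis using True assms by (simp add: pp_def field_simps of_nat_diff)
  next
    case False
    then have nz: "real (nzeros n x) \<noteq> 0" by (simp add: R0_def)
    have le: "nzeros n x \<le> n - 1" by (rule nzeros_le)
    from eq nz kpos False show ?thesis using le by (simp add: field_simps of_nat_diff)
  qed
qed

lemma sum_ww_x: "(\<Sum>l<n - 1. ww n k x l * real (x l)) = sn n x / real k"
proof -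
  have "\<And>l. ww n k x l * real (x l) = real (x l) / real k" by (auto simp: ww_def)
  then show ?thesis unfolding sn_def norm1_def by (simp add: sum_divide_distrib)
qed

lemma inc_apply: "inc x l i = x i + (if i = l then 1 else 0)"
  unfolding inc_def by auto

lemma sn_inc: "l < n - 1 \<Longrightarrow> sn n (inc x l) = sn n x + 1"
  unfolding sn_def norm1_def by (simp add: inc_apply sum.distrib)

lemma Qn_inc: "l < n - 1 \<Longrightarrow> Qn n (inc x l) = Qn n x + 2 * real (x l) + 1"
proof -
  assume l: "l < n - 1"
  have "Qn n (inc x l) = (\<Sum>i<n - 1. real (x i) ^ 2 + (if i = l then 2 * real (x l) + 1 else 0))"
    unfolding Qn_def by (intro sum.cong) (auto simp: inc_apply power2_eq_square algebra_simps)
  then show ?thesis using l by (simp add: sum.distrib Qn_def)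
qed

lemma sn_dec: "R0 n x \<Longrightarrow> sn n (dec_all n x) = sn n x - real (n - 1)"
proof -
  assume "R0 n x"
  then have nz: "\<forall>i<n-1. x i \<noteq> 0" by (simp add: R0_iff)
  have "sn n (dec_all n x) = (\<Sum>i<n-1. real (x i) - 1)"
    unfolding sn_def norm1_def dec_all_def using nz by (simp add: of_nat_diff Suc_le_eq)
  then show ?thesis by (simp add: sum_subtractf sn_def norm1_def)
qed

lemma sn_dec_le: "sn n (dec_all n x) \<le> sn n x"
  unfolding sn_def norm1_def dec_all_def by (simp add: sum_mono)

lemma Qn_dec: "R0 n x \<Longrightarrow> Qn n (dec_all n x) = Qn n x - 2 * sn n x + real (n - 1)"
proof -
  assume "R0 n x"
  then have nz: "\<forall>i<n-1. x i \<noteq> 0" by (simp add: R0_iff)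
  have "Qn n (dec_all n x) = (\<Sum>i<n-1. real (x i) ^ 2 - 2 * real (x i) + 1)"
    unfolding Qn_def dec_all_def using nz
    by (intro sum.cong) (auto simp: of_nat_diff Suc_le_eq power2_eq_square algebra_simps)
  then show ?thesis by (simp add: sum_subtractf sum.distrib sn_def norm1_def Qn_def sum_distrib_left)
qed

lemma inc_states: "x \<in> states n \<Longrightarrow> l < n - 1 \<Longrightarrow> inc x l \<in> states n"
  unfolding states_def by (auto simp: inc_apply)

lemma dec_states: "dec_all n x \<in> states n"
  unfolding states_def dec_all_def by auto

lemma succs_states: "x \<in> states n \<Longrightarrow> succs n x \<subseteq> states n"
  unfolding succs_def using inc_states dec_states by auto



lemma PP_lin: assumes "n - 1 < k"
  shows "PP n k (\<lambda>y. a * F y + b * G y + c) x = a * PP n k F x + b * PP n k G x + c"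
proof -
  have sw: "(\<Sum>l<n - 1. ww n k x l) = 1 - (if R0 n x then pp n k else 0)" by (rule sum_ww[OF assms])
  have "(\<Sum>l<n - 1. ww n k x l * (a * F (inc x l) + b * G (inc x l) + c))
     = a * (\<Sum>l<n - 1. ww n k x l * F (inc x l)) + b * (\<Sum>l<n - 1. ww n k x l * G (inc x l)) + c * (\<Sum>l<n - 1. ww n k x l)"
    by (simp add: algebra_simps sum.distrib sum_distrib_left)
  then show ?thesis unfolding PP_eq sw by (auto simp: algebra_simps)
qed

lemma PP_const: assumes "n - 1 < k" shows "PP n k (\<lambda>y. c) x = c"
  using PP_lin[OF assms, of 0 "\<lambda>_. 0" 0 "\<lambda>_. 0" c x] by simp

lemma drift_s: assumes "n - 1 < k" "1 \<le> n"
  shows "PP n k (sn n) x - sn n x = (if R0 n x then 1 - pp n k * real n else 1)"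
proof -
  have sw: "(\<Sum>l<n - 1. ww n k x l) = 1 - (if R0 n x then pp n k else 0)" by (rule sum_ww[OF assms(1)])
  have "(\<Sum>l<n - 1. ww n k x l * sn n (inc x l)) = (\<Sum>l<n - 1. ww n k x l * (sn n x + 1))"
    by (intro sum.cong) (auto simp: sn_inc)
  also have "\<dots> = (\<Sum>l<n - 1. ww n k x l) * (sn n x + 1)" by (simp add: sum_distrib_right)
  finally have e: "(\<Sum>l<n - 1. ww n k x l * sn n (inc x l)) = (1 - (if R0 n x then pp n k else 0)) * (sn n x + 1)"
    using sw by simp
  have rn: "real (n - 1) = real n - 1" using assms(2) by (simp add: of_nat_diff)
  show ?thesis unfolding PP_eq e using rn by (auto simp: sn_dec algebra_simps)
qed

lemma drift_Q: assumes "n - 1 < k" "1 \<le> n"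
  shows "PP n k (Qn n) x - Qn n x = (if R0 n x then 2 * sn n x * (1 / real k - pp n k) + pp n k * real (n - 1) - pp n k + 1
     else 1 + 2 * sn n x / real k)"
proof -
  have sw: "(\<Sum>l<n - 1. ww n k x l) = 1 - (if R0 n x then pp n k else 0)" by (rule sum_ww[OF assms(1)])
  have "(\<Sum>l<n - 1. ww n k x l * Qn n (inc x l)) = (\<Sum>l<n - 1. ww n k x l * (Qn n x + 1) + 2 * (ww n k x l * real (x l)))"
    by (intro sum.cong) (auto simp: Qn_inc algebra_simps)
  also have "\<dots> = (\<Sum>l<n - 1. ww n k x l) * (Qn n x + 1) + 2 * (sn n x / real k)"
    using sum_ww_x[of n k x] by (simp add: sum.distrib sum_distrib_right sum_distrib_left[symmetric])
  finally have e: "(\<Sum>l<n - 1. ww n k x l * Qn n (inc x l)) = (1 - (if R0 n x then pp n k else 0)) * (Qn n x + 1) + 2 * (sn n x / real k)"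
    using sw by simp
  show ?thesis unfolding PP_eq e by (auto simp: Qn_dec algebra_simps)
qed

lemma drift_s2: assumes "n - 1 < k" "1 \<le> n"
  shows "PP n k (\<lambda>y. sn n y ^ 2) x - sn n x ^ 2 = (if R0 n x then 2 * sn n x * (1 - pp n k - real (n - 1) * pp n k) + pp n k * real (n - 1) ^ 2 + 1 - pp n k
     else 2 * sn n x + 1)"
proof -
  have sw: "(\<Sum>l<n - 1. ww n k x l) = 1 - (if R0 n x then pp n k else 0)" by (rule sum_ww[OF assms(1)])
  have "(\<Sum>l<n - 1. ww n k x l * sn n (inc x l) ^ 2) = (\<Sum>l<n - 1. ww n k x l * (sn n x + 1) ^ 2)"
    by (intro sum.cong) (auto simp: sn_inc)
  also have "\<dots> = (\<Sum>l<n - 1. ww n k x l) * (sn n x + 1) ^ 2" by (simp add: sum_distrib_right)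
  finally have e: "(\<Sum>l<n - 1. ww n k x l * sn n (inc x l) ^ 2) = (1 - (if R0 n x then pp n k else 0)) * (sn n x + 1) ^ 2"
    using sw by simp
  show ?thesis unfolding PP_eq e by (auto simp: sn_dec algebra_simps power2_eq_square)
qed



lemma has_sum_finite_sum:
  fixes f :: "'i \<Rightarrow> 'a \<Rightarrow> real"
  assumes "finite I" "\<And>i. i \<in> I \<Longrightarrow> (f i has_sum a i) S"
  shows "((\<lambda>x. \<Sum>i\<in>I. f i x) has_sum (\<Sum>i\<in>I. a i)) S"
  using assms
proof (induction I rule: finite_induct)
  case empty
  then show ?case by simp
next
  case (insert i I)
  then have "((\<lambda>x. f i x + (\<Sum>i\<in>I. f i x)) has_sum (a i + (\<Sum>i\<in>I. a i))) S"
    by (intro has_sum_add) auto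
  then show ?case using insert by simp
qed

locale chain =
  fixes n k :: nat and \<pi> :: "(nat \<Rightarrow> nat) \<Rightarrow> real"
  assumes n3: "3 \<le> n" and nk: "n \<le> k" and stat: "stationary n k \<pi>"
begin

lemma pi_nonneg: "x \<in> states n \<Longrightarrow> 0 \<le> \<pi> x"
  using stat unfolding stationary_def by auto

lemma pi_sum: "(\<pi> has_sum 1) (states n)"
  using stat unfolding stationary_def by auto

lemma pi_bal: "y \<in> states n \<Longrightarrow> ((\<lambda>x. \<pi> x * trans n k x y) has_sum \<pi> y) (states n)"
  using stat unfolding stationary_def by auto

lemma kd: "n - 1 < k" using n3 nk by simp
lemma n1: "1 \<le> n" using n3 by simp
lemma kpos: "real k > 0" using n3 nk by simp

lemma pp_nonneg: "0 \<le> pp n k"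
  using kd unfolding pp_def by (simp add: divide_nonneg_pos)

lemma pp_le1: "pp n k \<le> 1"
  using kd kpos unfolding pp_def by (simp add: divide_le_eq_1)

lemma ww_nonneg: "0 \<le> ww n k x l"
proof -
  have "n - 1 - nzeros n x \<le> k" using kd by simp
  then show ?thesis unfolding ww_def by (auto intro!: divide_nonneg_nonneg)
qed

lemma trans_nonneg: "0 \<le> trans n k x y"
  unfolding trans_alt using pp_nonneg ww_nonneg by (auto intro!: sum_nonneg add_nonneg_nonneg)

lemma FI:
  assumes fin: "finite A" and As: "A \<subseteq> states n"
  shows "((\<lambda>x. \<pi> x * (\<Sum>y\<in>A. trans n k x y * H y)) has_sum
     ((\<Sum>x\<in>A. \<pi> x * (\<Sum>y\<in>succs n x - A. trans n k x y * H y)) - (\<Sum>x\<in>A. \<pi> x * (PP n k H x - H x))))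
     (states n - A)"
proof -
  have "((\<lambda>x. \<Sum>y\<in>A. \<pi> x * trans n k x y * H y) has_sum (\<Sum>y\<in>A. \<pi> y * H y)) (states n)"
    using fin by (intro has_sum_finite_sum has_sum_cmult_left pi_bal) (use As in auto)
  then have h1: "((\<lambda>x. \<pi> x * (\<Sum>y\<in>A. trans n k x y * H y)) has_sum (\<Sum>y\<in>A. \<pi> y * H y)) (states n)"
    by (simp add: sum_distrib_left mult.assoc)
  have h2: "((\<lambda>x. \<pi> x * (\<Sum>y\<in>A. trans n k x y * H y)) has_sum (\<Sum>x\<in>A. \<pi> x * (\<Sum>y\<in>A. trans n k x y * H y))) A"
    using fin by simp
  note h3 = has_sum_Diff[OF h1 h2 As]
  have inner: "(\<Sum>y\<in>A. trans n k x y * H y) = PP n k H x - (\<Sum>y\<in>succs n x - A. trans n k x y * H y)" for x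
  proof -
    have "(\<Sum>y\<in>A. trans n k x y * H y) = (\<Sum>y\<in>succs n x \<inter> A. trans n k x y * H y)"
      using fin by (intro sum.mono_neutral_right) (auto, metis trans_outside)
    moreover have "PP n k H x = (\<Sum>y\<in>succs n x \<inter> A. trans n k x y * H y) + (\<Sum>y\<in>succs n x - A. trans n k x y * H y)"
      unfolding PP_def by (rule sum.Int_Diff) simp
    ultimately show ?thesis by simp
  qed
  have "(\<Sum>y\<in>A. \<pi> y * H y) - (\<Sum>x\<in>A. \<pi> x * (\<Sum>y\<in>A. trans n k x y * H y))
     = (\<Sum>x\<in>A. \<pi> x * (\<Sum>y\<in>succs n x - A. trans n k x y * H y)) - (\<Sum>x\<in>A. \<pi> x * (PP n k H x - H x))"
    unfolding inner by (simp add: algebra_simps sum_subtractf sum.distrib)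
  then show ?thesis using h3 by simp
qed

end


lemma has_sum_seq:
  fixes f :: "'a \<Rightarrow> real"
  assumes hs: "(f has_sum L) S" and fin: "\<And>m. finite (A m)" and sub: "\<And>m. A m \<subseteq> S"
    and ev: "\<And>x. x \<in> S \<Longrightarrow> \<exists>m0. \<forall>m\<ge>m0. x \<in> A m"
  shows "(\<lambda>m. sum f (A m)) \<longlonglongrightarrow> L"
proof -
  have "filterlim A (finite_subsets_at_top S) sequentially"
    unfolding filterlim_finite_subsets_at_top
  proof (intro allI impI)
    fix X assume X: "finite X \<and> X \<subseteq> S"
    have "\<forall>x\<in>X. eventually (\<lambda>m. x \<in> A m) sequentially"
      using X ev by (auto simp: eventually_sequentially)
    then have "eventually (\<lambda>m. \<forall>x\<in>X. x \<in> A m) sequentially"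
      using X by (intro eventually_ball_finite) auto
    then show "eventually (\<lambda>m. finite (A m) \<and> X \<subseteq> A m \<and> A m \<subseteq> S) sequentially"
      using fin sub by (auto elim!: eventually_mono)
  qed
  moreover have "(sum f \<longlongrightarrow> L) (finite_subsets_at_top S)"
    using hs unfolding has_sum_def .
  ultimately show ?thesis using filterlim_compose by blast
qed

lemma finite_box: "finite {x\<in>states n. \<forall>i. x i \<le> m}"
proof -
  let ?g = "\<lambda>f i. if i < n - 1 then f i else (0::nat)"
  have "{x\<in>states n. \<forall>i. x i \<le> m} \<subseteq> ?g ` (PiE {..<n-1} (\<lambda>_. {..m}))"
  proof
    fix x assume x: "x \<in> {x\<in>states n. \<forall>i. x i \<le> m}"
    have "x = ?g (restrict x {..<n-1})"
      using x by (auto simp: states_def fun_eq_iff)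
    moreover have "restrict x {..<n-1} \<in> PiE {..<n-1} (\<lambda>_. {..m})" using x by auto
    ultimately show "x \<in> ?g ` (PiE {..<n-1} (\<lambda>_. {..m}))" by blast
  qed
  moreover have "finite (?g ` (PiE {..<n-1} (\<lambda>_. {..m})))"
    by (intro finite_imageI finite_PiE) auto
  ultimately show ?thesis by (rule finite_subset)
qed

definition Lv :: "nat \<Rightarrow> nat \<Rightarrow> (nat \<Rightarrow> nat) set" where
  "Lv n m = {x\<in>states n. norm1 n x \<le> m}"

lemma coord_le_norm1: "x \<in> states n \<Longrightarrow> x i \<le> norm1 n x"
proof (cases "i < n - 1")
  case True
  then show ?thesis unfolding norm1_def by (intro member_le_sum) auto
next
  case False
  assume "x \<in> states n"
  then have "x i = 0" using False unfolding states_def by auto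
  then show ?thesis by simp
qed

lemma finite_Lv: "finite (Lv n m)"
proof -
  have "Lv n m \<subseteq> {x\<in>states n. \<forall>i. x i \<le> m}"
    unfolding Lv_def using coord_le_norm1 le_trans by blast
  then show ?thesis using finite_box finite_subset by blast
qed

lemma Lv_sub: "Lv n m \<subseteq> states n" unfolding Lv_def by auto

lemma Lv_ev: "x \<in> states n \<Longrightarrow> \<exists>m0. \<forall>m\<ge>m0. x \<in> Lv n m"
  unfolding Lv_def by auto

lemma norm1_inc: "l < n - 1 \<Longrightarrow> norm1 n (inc x l) = norm1 n x + 1"
  using sn_inc[of l n x] unfolding sn_def by linarith

lemma norm1_dec_le: "norm1 n (dec_all n x) \<le> norm1 n x"
  using sn_dec_le[of n x] unfolding sn_def by linarith

context chain
begin

lemma cor_ineq: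
  assumes fin: "finite A" and As: "A \<subseteq> states n" and Adef: "\<And>x. x \<in> states n \<Longrightarrow> x \<in> A \<longleftrightarrow> G x \<le> c"
  shows "0 \<le> (\<Sum>x\<in>A. \<pi> x * (PP n k G x - G x))"
proof -
  define H where "H = (\<lambda>y. 1 * G y + 0 * G y + (- c))"
  have PH: "PP n k H x - H x = PP n k G x - G x" for x
    unfolding H_def PP_lin[OF kd] by simp
  note F = FI[OF fin As, of H]
  have V: "(\<Sum>x\<in>A. \<pi> x * (\<Sum>y\<in>succs n x - A. trans n k x y * H y)) - (\<Sum>x\<in>A. \<pi> x * (PP n k H x - H x)) \<le> 0"
  proof (rule has_sum_mono[OF F has_sum_0_simp])
    fix x assume x: "x \<in> states n - A"
    have "(\<Sum>y\<in>A. trans n k x y * H y) \<le> 0"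
    proof (intro sum_nonpos)
      fix y assume "y \<in> A"
      then have "H y \<le> 0" using As Adef unfolding H_def by auto
      then show "trans n k x y * H y \<le> 0" using trans_nonneg by (simp add: mult_nonneg_nonpos)
    qed
    then show "\<pi> x * (\<Sum>y\<in>A. trans n k x y * H y) \<le> 0"
      using pi_nonneg x by (simp add: mult_nonneg_nonpos)
  qed
  have O: "0 \<le> (\<Sum>x\<in>A. \<pi> x * (\<Sum>y\<in>succs n x - A. trans n k x y * H y))"
  proof (rule sum_nonneg)
    fix x assume x: "x \<in> A"
    then have xs: "x \<in> states n" using As by auto
    have "0 \<le> (\<Sum>y\<in>succs n x - A. trans n k x y * H y)"
    proof (rule sum_nonneg)
      fix y assume y: "y \<in> succs n x - A"
      then have "y \<in> states n" using succs_states[OF xs] by auto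
      then have "0 \<le> H y" using y Adef unfolding H_def by auto
      then show "0 \<le> trans n k x y * H y" using trans_nonneg by simp
    qed
    then show "0 \<le> \<pi> x * (\<Sum>y\<in>succs n x - A. trans n k x y * H y)"
      using pi_nonneg[OF xs] by simp
  qed
  show ?thesis using V O PH by simp
qed

lemma cor_level:
  fixes g :: "nat \<Rightarrow> real"
  assumes bnd: "\<And>x. x \<in> states n \<Longrightarrow> R0 n x \<Longrightarrow> m < norm1 n x \<Longrightarrow> norm1 n (dec_all n x) \<le> m \<Longrightarrow>
        pp n k * \<bar>g (norm1 n (dec_all n x)) - g (m + 1)\<bar> \<le> h x"
    and hnn: "\<And>x. x \<in> states n \<Longrightarrow> 0 \<le> h x"
    and hsum: "(\<lambda>x. \<pi> x * h x) summable_on states n"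
  shows "\<bar>\<Sum>x\<in>Lv n m. \<pi> x * (PP n k (\<lambda>y. g (norm1 n y)) x - g (norm1 n x))\<bar>
     \<le> infsum (\<lambda>x. \<pi> x * h x) (states n - Lv n m)"
proof -
  define H where "H = (\<lambda>y. 1 * g (norm1 n y) + 0 * g (norm1 n y) + (- g (m + 1)))"
  have PH: "PP n k H x - H x = PP n k (\<lambda>y. g (norm1 n y)) x - g (norm1 n x)" for x
    unfolding H_def PP_lin[OF kd] by simp
  note F = FI[OF finite_Lv[of n m] Lv_sub[of n m], of H]
  have O: "(\<Sum>x\<in>Lv n m. \<pi> x * (\<Sum>y\<in>succs n x - Lv n m. trans n k x y * H y)) = 0"
  proof (intro sum.neutral ballI)
    fix x assume x: "x \<in> Lv n m"
    have "(\<Sum>y\<in>succs n x - Lv n m. trans n k x y * H y) = 0"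
    proof (intro sum.neutral ballI)
      fix y assume y: "y \<in> succs n x - Lv n m"
      have xs: "x \<in> states n" and xm: "norm1 n x \<le> m" using x unfolding Lv_def by auto
      have ys: "y \<in> states n" using y succs_states[OF xs] by auto
      have ym: "m < norm1 n y" using y ys unfolding Lv_def by auto
      show "trans n k x y * H y = 0"
      proof (cases "y = dec_all n x")
        case True
        then show ?thesis using ym xm norm1_dec_le[of n x] by simp
      next
        case False
        then obtain l where l: "l < n - 1" "y = inc x l" using y unfolding succs_def by auto
        then have "norm1 n y = m + 1" using norm1_inc[of l n x] xm ym by simp
        then show ?thesis unfolding H_def by simp
      qed
    qed
    then show "\<pi> x * (\<Sum>y\<in>succs n x - Lv n m. trans n k x y * H y) = 0" by simp
  qed
  define V where "V = (\<Sum>x\<in>Lv n m. \<pi> x * (\<Sum>y\<in>succs n x - Lv n m. trans n k x y * H y)) - (\<Sum>x\<in>Lv n m. \<pi> x * (PP n k H x - H x))"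
  have F': "((\<lambda>x. \<pi> x * (\<Sum>y\<in>Lv n m. trans n k x y * H y)) has_sum V) (states n - Lv n m)"
    using F unfolding V_def .
  have inner: "\<bar>\<pi> x * (\<Sum>y\<in>Lv n m. trans n k x y * H y)\<bar> \<le> \<pi> x * h x" if x: "x \<in> states n - Lv n m" for x
  proof -
    have xs: "x \<in> states n" and xm: "m < norm1 n x" using x unfolding Lv_def by auto
    have "(\<Sum>y\<in>Lv n m. trans n k x y * H y) = (if R0 n x \<and> dec_all n x \<in> Lv n m then pp n k * H (dec_all n x) else 0)
       + (\<Sum>l<n - 1. if inc x l \<in> Lv n m then ww n k x l * H (inc x l) else 0)"
      by (rule sum_trans[OF finite_Lv])
    also have "(\<Sum>l<n - 1. if inc x l \<in> Lv n m then ww n k x l * H (inc x l) else 0) = 0"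
      using xm by (intro sum.neutral) (auto simp: Lv_def norm1_inc)
    finally have eq: "(\<Sum>y\<in>Lv n m. trans n k x y * H y) = (if R0 n x \<and> dec_all n x \<in> Lv n m then pp n k * H (dec_all n x) else 0)"
      by simp
    have "\<bar>\<Sum>y\<in>Lv n m. trans n k x y * H y\<bar> \<le> h x"
    proof (cases "R0 n x \<and> dec_all n x \<in> Lv n m")
      case True
      then have "norm1 n (dec_all n x) \<le> m" unfolding Lv_def by auto
      then have "pp n k * \<bar>g (norm1 n (dec_all n x)) - g (m + 1)\<bar> \<le> h x"
        using bnd xs True xm by auto
      then show ?thesis using eq True pp_nonneg unfolding H_def by (simp add: abs_mult)
    next
      case False
      then have "(\<Sum>y\<in>Lv n m. trans n k x y * H y) = 0" using eq by (simp only: if_False)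
      then show ?thesis using hnn xs by simp
    qed
    then show ?thesis using pi_nonneg[OF xs] by (simp add: abs_mult mult_left_mono)
  qed
  have hs: "((\<lambda>x. \<pi> x * h x) has_sum infsum (\<lambda>x. \<pi> x * h x) (states n - Lv n m)) (states n - Lv n m)"
    using summable_on_subset[OF hsum, of "states n - Lv n m"] by (auto intro: has_sum_infsum)
  have "V \<le> infsum (\<lambda>x. \<pi> x * h x) (states n - Lv n m)"
    using inner by (intro has_sum_mono[OF F' hs]) (auto simp: abs_le_iff)
  moreover have hs': "((\<lambda>x. - (\<pi> x * h x)) has_sum (- infsum (\<lambda>x. \<pi> x * h x) (states n - Lv n m))) (states n - Lv n m)"
    using hs by (simp add: has_sum_uminus)
  moreover have "- infsum (\<lambda>x. \<pi> x * h x) (states n - Lv n m) \<le> V"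
    using inner by (intro has_sum_mono[OF hs' F']) (force simp: abs_le_iff)
  ultimately have "\<bar>V\<bar> \<le> infsum (\<lambda>x. \<pi> x * h x) (states n - Lv n m)" by simp
  then show ?thesis using O PH unfolding V_def by simp
qed

end


lemma limit_zero:
  fixes X t :: "nat \<Rightarrow> real"
  assumes "X \<longlonglongrightarrow> V" "t \<longlonglongrightarrow> 0" "\<And>m. \<bar>X m\<bar> \<le> t m"
  shows "V = 0"
proof -
  have "(\<lambda>m. \<bar>X m\<bar>) \<longlonglongrightarrow> \<bar>V\<bar>" using assms(1) by (rule tendsto_rabs)
  then have "\<bar>V\<bar> \<le> 0" using assms(2,3) by (intro LIMSEQ_le) auto
  then show ?thesis by simp
qed

lemma has_sum_diff':
  fixes f g :: "'a \<Rightarrow> real"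
  assumes "(f has_sum a) A" "(g has_sum b) A"
  shows "((\<lambda>x. f x - g x) has_sum (a - b)) A"
proof -
  have "((\<lambda>x. - g x) has_sum (- b)) A" using assms(2) by (simp add: has_sum_uminus)
  from has_sum_add[OF assms(1) this] show ?thesis by simp
qed

lemma has_sum_cong_val:
  fixes f g :: "'a \<Rightarrow> real"
  assumes "(f has_sum a) A" "\<And>x. x \<in> A \<Longrightarrow> f x = g x" "a = b"
  shows "(g has_sum b) A"
  using assms has_sum_cong by metis

lemma sn_nonneg: "0 \<le> sn n x" unfolding sn_def by simp

lemma sn_eq: "sn n = (\<lambda>y. real (norm1 n y))" unfolding sn_def by auto

context chain
begin

lemma pi_summable: "\<pi> summable_on states n" using pi_sum by (auto simp: summable_on_def)

lemma tail0:
  fixes f :: "(nat \<Rightarrow> nat) \<Rightarrow> real"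
  assumes "(f has_sum T) (states n)"
  shows "(\<lambda>m. infsum f (states n - Lv n m)) \<longlonglongrightarrow> 0"
proof -
  have e: "infsum f (states n - Lv n m) = T - sum f (Lv n m)" for m
  proof -
    have "(f has_sum sum f (Lv n m)) (Lv n m)" using finite_Lv[of n m] by simp
    from has_sum_Diff[OF assms this Lv_sub] show ?thesis by (rule infsumI)
  qed
  have "(\<lambda>m. sum f (Lv n m)) \<longlonglongrightarrow> T"
    by (rule has_sum_seq[OF assms finite_Lv Lv_sub Lv_ev])
  then have "(\<lambda>m. T - sum f (Lv n m)) \<longlonglongrightarrow> T - T" by (intro tendsto_diff) auto
  then show ?thesis unfolding e by simp
qed

definition "I0 = infsum (\<lambda>x. \<pi> x * (if R0 n x then 1 else 0)) (states n)"
definition "BB = infsum (\<lambda>x. \<pi> x * (if R0 n x then sn n x else 0)) (states n)"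
definition "AA = infsum (\<lambda>x. \<pi> x * (if R0 n x then 0 else sn n x)) (states n)"

lemma hs_R0: "((\<lambda>x. \<pi> x * (if R0 n x then 1 else 0)) has_sum I0) (states n)"
proof -
  have "(\<lambda>x. \<pi> x * (if R0 n x then 1 else 0)) summable_on states n"
    by (rule summable_on_comparison_test[OF pi_summable]) (auto simp: pi_nonneg)
  then show ?thesis unfolding I0_def by (rule has_sum_infsum)
qed

lemma hs_nR0: "((\<lambda>x. \<pi> x * (if R0 n x then 0 else 1)) has_sum (1 - I0)) (states n)"
proof -
  have "((\<lambda>x. \<pi> x - \<pi> x * (if R0 n x then 1 else 0)) has_sum (1 - I0)) (states n)"
    by (intro has_sum_diff' pi_sum hs_R0)
  then show ?thesis by (rule has_sum_cong_val) auto
qed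

lemma lin_const: "((\<lambda>x. \<pi> x * (if R0 n x then b else e)) has_sum (b * I0 + e * (1 - I0))) (states n)"
proof -
  have "((\<lambda>x. b * (\<pi> x * (if R0 n x then 1 else 0)) + e * (\<pi> x * (if R0 n x then 0 else 1))) has_sum (b * I0 + e * (1 - I0))) (states n)"
    by (intro has_sum_add has_sum_cmult_right hs_R0 hs_nR0)
  then show ?thesis by (rule has_sum_cong_val) auto
qed

lemma exact_s: "1 - pp n k * real n * I0 = 0"
proof -
  have hs: "((\<lambda>x. \<pi> x * (PP n k (sn n) x - sn n x)) has_sum (1 - pp n k * real n * I0)) (states n)"
  proof -
    have "((\<lambda>x. \<pi> x * (if R0 n x then 1 - pp n k * real n else 1)) has_sum ((1 - pp n k * real n) * I0 + 1 * (1 - I0))) (states n)"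
      by (rule lin_const)
    then show ?thesis by (rule has_sum_cong_val) (auto simp: drift_s[OF kd n1] algebra_simps)
  qed
  have lim: "(\<lambda>m. \<Sum>x\<in>Lv n m. \<pi> x * (PP n k (sn n) x - sn n x)) \<longlonglongrightarrow> 1 - pp n k * real n * I0"
    by (rule has_sum_seq[OF hs finite_Lv Lv_sub Lv_ev])
  have hsd: "((\<lambda>x. \<pi> x * real (n - 1)) has_sum (1 * real (n - 1))) (states n)"
    by (intro has_sum_cmult_left pi_sum)
  have bnd: "\<bar>\<Sum>x\<in>Lv n m. \<pi> x * (PP n k (sn n) x - sn n x)\<bar> \<le> infsum (\<lambda>x. \<pi> x * real (n - 1)) (states n - Lv n m)" for m
  proof -
    have "\<bar>\<Sum>x\<in>Lv n m. \<pi> x * (PP n k (\<lambda>y. real (norm1 n y)) x - real (norm1 n x))\<bar> \<le> infsum (\<lambda>x. \<pi> x * real (n - 1)) (states n - Lv n m)"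
    proof (rule cor_level)
      fix x assume x: "x \<in> states n" "R0 n x" "m < norm1 n x" "norm1 n (dec_all n x) \<le> m"
      have e: "real (norm1 n (dec_all n x)) = real (norm1 n x) - real (n - 1)"
        using sn_dec[OF x(2)] unfolding sn_def .
      have "\<bar>real (norm1 n (dec_all n x)) - real (m + 1)\<bar> \<le> real (n - 1)"
        using e x(3,4) by (simp add: abs_le_iff; linarith)
      then show "pp n k * \<bar>real (norm1 n (dec_all n x)) - real (m + 1)\<bar> \<le> real (n - 1)"
        using pp_le1 pp_nonneg by (meson abs_ge_zero dual_order.trans mult_left_le_one_le)
    next
      show "(\<lambda>x. \<pi> x * real (n - 1)) summable_on states n" using hsd by (auto simp: summable_on_def)
    qed auto
    then show ?thesis by (simp add: sn_eq)
  qed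
  show ?thesis
    by (rule limit_zero[OF lim tail0[OF hsd] bnd])
qed

end


context chain
begin

lemma trans_dec_ge: "R0 n x \<Longrightarrow> pp n k \<le> trans n k x (dec_all n x)"
  unfolding trans_alt using ww_nonneg by (auto intro!: sum_nonneg)

lemma pp_pos: "0 < pp n k"
  using kd kpos unfolding pp_def by simp

lemma not_kn: "k \<noteq> n"
proof
  assume kn: "k = n"
  have "pp n k * real n = 1" using kn n1 kpos unfolding pp_def by (simp add: of_nat_diff)
  then have I: "I0 = 1" using exact_s by simp
  have z: "\<pi> x = 0" if "x \<in> states n" "\<not> R0 n x" for x
  proof -
    have "\<pi> x * (if R0 n x then 0 else 1) = 0"
      using nonneg_has_sum_le_0D[OF hs_nR0[unfolded I], of x] that pi_nonneg by auto
    then show ?thesis using that by simp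
  qed
  have all: "\<forall>x. x \<in> states n \<longrightarrow> norm1 n x = N \<longrightarrow> \<pi> x = 0" for N
  proof (induction N rule: less_induct)
    case (less N)
    show ?case
    proof (intro allI impI)
      fix x assume x: "x \<in> states n" and xN: "norm1 n x = N"
      show "\<pi> x = 0"
      proof (cases "R0 n x")
        case False then show ?thesis using z x by simp
      next
        case True
        let ?y = "dec_all n x"
        have ys: "?y \<in> states n" by (rule dec_states)
        have "real (norm1 n ?y) = real (norm1 n x) - real (n - 1)"
          using sn_dec[OF True] unfolding sn_def .
        moreover have "real (n - 1) > 0" using n3 by simp
        ultimately have "norm1 n ?y < N" using xN by linarith
        then have py: "\<pi> ?y = 0" using less ys by blast
        have hs: "((\<lambda>z. \<pi> z * trans n k z ?y) has_sum 0) (states n)"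
          using pi_bal[OF ys] py by simp
        have "\<pi> x * trans n k x ?y = 0"
          using nonneg_has_sum_le_0D[OF hs, of x] x pi_nonneg trans_nonneg by auto
        moreover have "\<pi> x * pp n k \<le> \<pi> x * trans n k x ?y"
          using trans_dec_ge[OF True] pi_nonneg[OF x] by (simp add: mult_left_mono)
        ultimately have "\<pi> x * pp n k \<le> 0" by (metis order.refl mult_zero_left mult_zero_right)
        then have "\<pi> x \<le> 0" using pp_pos by (simp add: mult_le_0_iff)
        then show ?thesis using pi_nonneg[OF x] by simp
      qed
    qed
  qed
  have "(\<pi> has_sum 0) (states n)"
    using all by (intro has_sum_0) auto
  then show False using pi_sum has_sum_unique by fastforce
qed

end


lemma alg_final:
  fixes K N q I A B :: real
  assumes K: "K > N" and N: "N \<ge> 3" and q: "q = (K - (N - 1)) / K"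
    and e1: "1 - q * N * I = 0"
    and e2: "2 * (1 - q - (N - 1) * q) * B + (q * (N - 1)^2 + 1 - q) * I + 2 * A + (1 - I) = 0"
    and e3: "2 * (1 / K - q) * B + (q * (N - 1) - q + 1) * I + (2 / K) * A + (1 - I) = 0"
  shows "A + B = K * (N - 1) / (2 * (K - N))"
proof -
  have Kp: "K > 0" using K N by simp
  have Kq: "K * q = K - N + 1" using q Kp by (simp add: field_simps)
  define u where "u = (N - 1) * (K - N) / K"
  have c2: "1 - q - (N - 1) * q = - u"
  proof -
    have "K * (1 - q - (N - 1) * q) = K - N * (K * q)" by (simp add: algebra_simps)
    also have "\<dots> = - (N - 1) * (K - N)" unfolding Kq by (simp add: algebra_simps)
    finally show ?thesis using Kp unfolding u_def by (simp add: field_simps)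
  qed
  have c1: "1 / K - q = - (K - N) / K" using q Kp by (simp add: field_simps)
  have qN: "q * N = N * (K - N + 1) / K"
  proof -
    have "q * N = N * (K * q) / K" using Kp by simp
    then show ?thesis unfolding Kq .
  qed
  have I: "I = K / (N * (K - N + 1))"
  proof -
    have "I * (N * (K - N + 1) / K) = 1" using e1 qN by (simp add: algebra_simps)
    then have "I * (N * (K - N + 1)) = K" using Kp by (simp add: field_simps)
    moreover have "N * (K - N + 1) > 0" using K N by (intro mult_pos_pos) auto
    ultimately show ?thesis by (metis nonzero_mult_div_cancel_right less_irrefl)
  qed
  have qNI: "q * N * I = 1" using e1 by simp
  have "(q * (N - 1)^2 + 1 - q) * I + (1 - I) = (N - 2) * (q * N * I) + 1"
    by (simp add: algebra_simps power2_eq_square)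
  then have c3: "(q * (N - 1)^2 + 1 - q) * I + (1 - I) = N - 1" using qNI by simp
  have "(q * (N - 1) - q + 1) * I + (1 - I) = (N - 2) / N * (q * N * I) + 1"
    using N by (simp add: field_simps)
  then have c4: "(q * (N - 1) - q + 1) * I + (1 - I) = 2 * (N - 1) / N" using qNI N by (simp add: field_simps)
  have A: "A = u * B - (N - 1) / 2"
  proof -
    have "2 * (- u) * B + ((q * (N - 1)^2 + 1 - q) * I + (1 - I)) + 2 * A = 0"
      using e2[unfolded c2] by (simp add: algebra_simps)
    then have "2 * (- u) * B + (N - 1) + 2 * A = 0" unfolding c3 .
    then show ?thesis by (simp add: algebra_simps) (simp add: field_simps)
  qed
  have "2 * (- (K - N) / K) * B + 2 * (N - 1) / N + (2 / K) * (u * B - (N - 1) / 2) = 0"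
    using e3 c1 c4 A by simp
  moreover have "2 * (- (K - N) / K) * B + 2 * (N - 1) / N + (2 / K) * (u * B - (N - 1) / 2)
     = (- (2 * N * (K - N) * (K - N + 1)) * B + (N - 1) * K * (2 * K - N)) / (K^2 * N)"
    unfolding u_def using Kp N by (simp add: field_simps power2_eq_square; simp add: algebra_simps)
  ultimately have "(- (2 * N * (K - N) * (K - N + 1)) * B + (N - 1) * K * (2 * K - N)) = 0"
    using Kp N by simp
  moreover have "2 * N * (K - N) * (K - N + 1) > 0" using K N by (intro mult_pos_pos) auto
  ultimately have B: "B = (N - 1) * K * (2 * K - N) / (2 * N * (K - N) * (K - N + 1))"
    by (simp add: field_simps)
  have u1: "u + 1 = N * (K - N + 1) / K" unfolding u_def using Kp by (simp add: field_simps; simp add: algebra_simps)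
  have nz1: "K - N + 1 \<noteq> 0" "K - N \<noteq> 0" "N \<noteq> 0" "K \<noteq> 0" using K N by auto
  have gen: "(N * a / K) * ((N - 1) * K * (2 * K - N) / (2 * N * b * a)) = (N - 1) * (2 * K - N) / (2 * b)"
    if "a \<noteq> 0" "b \<noteq> 0" for a b using that nz1 by (simp add: field_simps)
  have uB: "(u + 1) * B = (N - 1) * (2 * K - N) / (2 * (K - N))"
    unfolding u1 B using gen[OF nz1(1,2)] by (simp add: mult.assoc)
  have "A + B = (u + 1) * B - (N - 1) / 2" using A by (simp add: algebra_simps)
  also have "\<dots> = K * (N - 1) / (2 * (K - N))" unfolding uB using nz1 by (simp add: field_simps; simp add: algebra_simps)
  finally show ?thesis .
qed


lemma sn_sum: "sn n x = (\<Sum>i<n - 1. real (x i))"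
  unfolding sn_def norm1_def by simp

lemma cs: "sn n x ^ 2 \<le> real (n - 1) * Qn n x"
proof -
  have "(\<Sum>i<n - 1. real (x i) * 1)\<^sup>2 \<le> (\<Sum>i<n - 1. (real (x i))\<^sup>2) * (\<Sum>i<n - 1. (1::real)\<^sup>2)"
    by (rule Cauchy_Schwarz_ineq_sum)
  then show ?thesis unfolding sn_sum Qn_def by (simp add: mult.commute)
qed

lemma coord_le_Q: "real (x i) \<le> Qn n x" if "i < n - 1"
proof -
  have "real (x i) \<le> real (x i) ^ 2"
    by (cases "x i") (auto simp: power2_eq_square)
  also have "\<dots> \<le> Qn n x" unfolding Qn_def using that by (intro member_le_sum) auto
  finally show ?thesis .
qed

lemma Q_le_s2: "Qn n x \<le> sn n x ^ 2"
proof -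
  have "Qn n x = (\<Sum>i<n - 1. real (x i) * real (x i))" unfolding Qn_def by (simp add: power2_eq_square)
  also have "\<dots> \<le> (\<Sum>i<n - 1. real (x i) * sn n x)"
  proof (intro sum_mono mult_left_mono)
    fix i assume "i \<in> {..<n-1}"
    then show "real (x i) \<le> sn n x" unfolding sn_sum by (intro member_le_sum) auto
  qed auto
  also have "\<dots> = sn n x ^ 2" unfolding sn_sum by (simp add: power2_eq_square sum_distrib_right)
  finally show ?thesis .
qed

lemma finite_sub:
  assumes "\<And>x i. x \<in> states n \<Longrightarrow> G x \<le> c \<Longrightarrow> i < n - 1 \<Longrightarrow> real (x i) \<le> b"
  shows "finite {x\<in>states n. G x \<le> c}"
proof -
  have "{x\<in>states n. G x \<le> c} \<subseteq> {x\<in>states n. \<forall>i. x i \<le> nat \<lceil>b\<rceil>}"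
  proof safe
    fix x i assume x: "x \<in> states n" "G x \<le> c"
    show "x i \<le> nat \<lceil>b\<rceil>"
    proof (cases "i < n - 1")
      case True
      then have "real (x i) \<le> b" using assms x by auto
      then show ?thesis by linarith
    next
      case False
      then show ?thesis using x unfolding states_def by auto
    qed
  qed
  then show ?thesis using finite_box finite_subset by blast
qed

context chain
begin

lemma ineq_lim:
  assumes fin: "\<And>m. finite {x\<in>states n. G x \<le> real m}"
    and hs: "((\<lambda>x. \<pi> x * (PP n k G x - G x)) has_sum V) (states n)"
  shows "0 \<le> V"
proof -
  define A where "A m = {x\<in>states n. G x \<le> real m}" for m
  have lim: "(\<lambda>m. \<Sum>x\<in>A m. \<pi> x * (PP n k G x - G x)) \<longlonglongrightarrow> V"
  proof (rule has_sum_seq[OF hs])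
    show "finite (A m)" for m unfolding A_def by (rule fin)
    show "A m \<subseteq> states n" for m unfolding A_def by auto
    fix x assume x: "x \<in> states n"
    obtain m0 :: nat where "G x \<le> real m0" using real_arch_simple by blast
    then show "\<exists>m0. \<forall>m\<ge>m0. x \<in> A m" using x unfolding A_def
      by (intro exI[of _ m0]) (auto intro: order_trans)
  qed
  have "0 \<le> (\<Sum>x\<in>A m. \<pi> x * (PP n k G x - G x))" for m
    by (rule cor_ineq) (auto simp: A_def fin)
  then show ?thesis by (intro LIMSEQ_le_const[OF lim]) auto
qed

end


lemma F_R0:
  fixes K N q s :: real
  assumes K: "K > N" and N: "N \<ge> 3" and q: "q = (K - (N - 1)) / K" and s: "s \<ge> 0"
  shows "(N - 1/2) * (2 * s * (1 / K - q) + q * (N - 1) - q + 1) - (2 * s * (1 - q - (N - 1) * q) + q * (N - 1)^2 + 1 - q)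
     \<le> - ((K - N) / K) * s + (N - 1/2) * N"
proof -
  have Kp: "K > 0" using K N by simp
  have Kq: "K * q = K - N + 1" using q Kp by (simp add: field_simps)
  define t where "t = (K - N) / K"
  have c1: "1 / K - q = - t"
  proof -
    have "K * (1 / K - q) = 1 - K * q" using Kp by (simp add: right_diff_distrib)
    also have "\<dots> = - (K - N)" unfolding Kq by simp
    finally show ?thesis unfolding t_def using Kp by (simp add: field_simps)
  qed
  have c2: "1 - q - (N - 1) * q = - (N - 1) * t"
  proof -
    have "K * (1 - q - (N - 1) * q) = K - N * (K * q)" by (simp add: algebra_simps)
    also have "\<dots> = - (N - 1) * (K - N)" unfolding Kq by (simp add: algebra_simps)
    finally show ?thesis using Kp unfolding t_def by (simp add: field_simps)
  qed
  have q0: "0 \<le> q" using q Kp K by simp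
  have q1: "q \<le> 1" using q Kp N by (simp add: divide_le_eq_1)
  have "(N - 1/2) * (2 * s * (1 / K - q) + q * (N - 1) - q + 1) - (2 * s * (1 - q - (N - 1) * q) + q * (N - 1)^2 + 1 - q)
      = - t * s + ((N - 1/2) * (q * (N - 1) - q + 1) - (q * (N - 1)^2 + 1 - q))"
    unfolding c1 c2 by (simp add: algebra_simps)
  also have "(N - 1/2) * (q * (N - 1) - q + 1) \<le> (N - 1/2) * N"
  proof (rule mult_left_mono)
    have "q * (N - 2) \<le> 1 * (N - 2)" using q1 N by (intro mult_right_mono) auto
    then show "q * (N - 1) - q + 1 \<le> N" by (simp add: algebra_simps)
  qed (use N in auto)
  moreover have "0 \<le> q * (N - 1)^2 + 1 - q"
  proof -
    have "0 \<le> q * (N - 1)^2" using q0 by simp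
    then show ?thesis using q1 by linarith
  qed
  ultimately show ?thesis unfolding t_def by simp
qed

lemma F_off:
  fixes K N s :: real
  assumes K: "K > N" and N: "N \<ge> 3" and s: "s \<ge> 0"
  shows "(N - 1/2) * (1 + 2 * s / K) - (2 * s + 1) \<le> - ((K - N) / K) * s + (N - 1/2) * N"
proof -
  have Kp: "K > 0" using K N by simp
  have "(N - 1/2) * (1 + 2 * s / K) - (2 * s + 1) - (- ((K - N) / K) * s) = s * ((N - 1 - K) / K) + (N - 1/2) - 1"
    using Kp by (simp add: field_simps)
  moreover have "s * ((N - 1 - K) / K) \<le> 0"
    using s K Kp by (intro mult_nonneg_nonpos) (auto simp: divide_nonpos_pos)
  moreover have "(N - 1/2) - 1 \<le> (N - 1/2) * N"
  proof -
    have "(N - 1/2) * 1 \<le> (N - 1/2) * N" using N by (intro mult_left_mono) auto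
    then show ?thesis by simp
  qed
  ultimately show ?thesis by linarith
qed



context chain
begin

lemma rn: "real (n - 1) = real n - 1" using n1 by (simp add: of_nat_diff)

lemma pp_eq: "pp n k = (real k - (real n - 1)) / real k" unfolding pp_def rn ..

definition "FF = (\<lambda>y. (real n - 1/2) * Qn n y + (-1) * sn n y ^ 2 + 0)"

lemma dF: "PP n k FF x - FF x = (real n - 1/2) * (PP n k (Qn n) x - Qn n x) - (PP n k (\<lambda>y. sn n y ^ 2) x - sn n x ^ 2)"
  unfolding FF_def PP_lin[OF kd] by (simp add: algebra_simps)

lemma dF_bound: assumes kn: "n < k" and x: "x \<in> states n"
  shows "PP n k FF x - FF x \<le> - ((real k - real n) / real k) * sn n x + (real n - 1/2) * real n"
proof -
  have K: "real k > real n" using kn by simp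
  have N: "real n \<ge> 3" using n3 by simp
  show ?thesis
  proof (cases "R0 n x")
    case True
    then show ?thesis unfolding dF drift_Q[OF kd n1] drift_s2[OF kd n1] rn
      using F_R0[OF K N pp_eq sn_nonneg] by simp
  next
    case False
    then show ?thesis unfolding dF drift_Q[OF kd n1] drift_s2[OF kd n1] rn
      using F_off[OF K N sn_nonneg] by simp
  qed
qed

lemma summ_s: assumes kn: "n < k" shows "(\<lambda>x. \<pi> x * sn n x) summable_on states n"
proof -
  define \<kappa> where "\<kappa> = (real k - real n) / real k"
  define C where "C = (real n - 1/2) * real n"
  have kap: "\<kappa> > 0" unfolding \<kappa>_def using kn kpos by simp
  define A where "A m = {x\<in>states n. FF x \<le> real m}" for m
  have finA: "finite (A m)" for m
    unfolding A_def
  proof (rule finite_sub)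
    fix x i assume x: "x \<in> states n" "FF x \<le> real m" and i: "i < n - 1"
    have "sn n x ^ 2 \<le> real (n - 1) * Qn n x" by (rule cs)
    then have "FF x \<ge> Qn n x / 2" unfolding FF_def rn by (simp add: algebra_simps)
    then show "real (x i) \<le> 2 * real m" using coord_le_Q[OF i, of x] x by linarith
  qed
  have bndA: "\<kappa> * (\<Sum>x\<in>A m. \<pi> x * sn n x) \<le> C" for m
  proof -
    have "0 \<le> (\<Sum>x\<in>A m. \<pi> x * (PP n k FF x - FF x))"
      using finA[of m, unfolded A_def] by (intro cor_ineq) (auto simp: A_def)
    also have "\<dots> \<le> (\<Sum>x\<in>A m. \<pi> x * (- \<kappa> * sn n x + C))"
    proof (intro sum_mono mult_left_mono)
      fix x assume "x \<in> A m"
      then have x: "x \<in> states n" unfolding A_def by auto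
      show "PP n k FF x - FF x \<le> - \<kappa> * sn n x + C" unfolding \<kappa>_def C_def by (rule dF_bound[OF kn x])
      show "0 \<le> \<pi> x" by (rule pi_nonneg[OF x])
    qed
    also have "\<dots> = C * (\<Sum>x\<in>A m. \<pi> x) - \<kappa> * (\<Sum>x\<in>A m. \<pi> x * sn n x)"
      by (simp add: algebra_simps sum.distrib sum_distrib_left sum_subtractf)
    also have "(\<Sum>x\<in>A m. \<pi> x) \<le> 1"
      using finite_sum_le_infsum[OF pi_summable finA, of m] pi_sum pi_nonneg
      by (auto simp: A_def infsumI)
    then have "C * (\<Sum>x\<in>A m. \<pi> x) \<le> C"
      unfolding C_def using n3 by (intro mult_left_le) auto
    finally show ?thesis by simp
  qed
  show ?thesis
  proof (rule nonneg_bdd_above_summable_on)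
    show "0 \<le> \<pi> x * sn n x" if "x \<in> states n" for x using pi_nonneg[OF that] sn_nonneg by simp
    show "bdd_above (sum (\<lambda>x. \<pi> x * sn n x) ` {F. F \<subseteq> states n \<and> finite F})"
    proof (rule bdd_aboveI2)
      fix X assume X: "X \<in> {F. F \<subseteq> states n \<and> finite F}"
      obtain m :: nat where m: "(\<Sum>x\<in>X. \<bar>FF x\<bar>) \<le> real m" using real_arch_simple by blast
      have "X \<subseteq> A m"
      proof
        fix x assume "x \<in> X"
        then have "\<bar>FF x\<bar> \<le> (\<Sum>x\<in>X. \<bar>FF x\<bar>)" using X by (intro member_le_sum) auto
        then show "x \<in> A m" using m X \<open>x \<in> X\<close> unfolding A_def by auto
      qed
      then have "(\<Sum>x\<in>X. \<pi> x * sn n x) \<le> (\<Sum>x\<in>A m. \<pi> x * sn n x)"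
        using finA pi_nonneg sn_nonneg by (intro sum_mono2) (auto simp: A_def)
      also have "\<dots> \<le> C / \<kappa>" using bndA[of m] kap by (simp add: field_simps mult.commute)
      finally show "(\<Sum>x\<in>X. \<pi> x * sn n x) \<le> C / \<kappa>" .
    qed
  qed
qed

end


locale chain2 = chain +
  assumes kn: "n < k"
begin

lemma SS: "(\<lambda>x. \<pi> x * sn n x) summable_on states n" by (rule summ_s[OF kn])

lemma hs_B: "((\<lambda>x. \<pi> x * (if R0 n x then sn n x else 0)) has_sum BB) (states n)"
proof -
  have "(\<lambda>x. \<pi> x * (if R0 n x then sn n x else 0)) summable_on states n"
    by (rule summable_on_comparison_test[OF SS]) (auto simp: pi_nonneg sn_nonneg)
  then show ?thesis unfolding BB_def by (rule has_sum_infsum)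
qed

lemma hs_A: "((\<lambda>x. \<pi> x * (if R0 n x then 0 else sn n x)) has_sum AA) (states n)"
proof -
  have "(\<lambda>x. \<pi> x * (if R0 n x then 0 else sn n x)) summable_on states n"
    by (rule summable_on_comparison_test[OF SS]) (auto simp: pi_nonneg sn_nonneg)
  then show ?thesis unfolding AA_def by (rule has_sum_infsum)
qed

lemma hs_s: "((\<lambda>x. \<pi> x * sn n x) has_sum (BB + AA)) (states n)"
  using has_sum_add[OF hs_B hs_A] by (rule has_sum_cong_val) auto

lemma lin_R0: "((\<lambda>x. \<pi> x * (if R0 n x then a * sn n x + b else c * sn n x + e)) has_sum
   (a * BB + c * AA + (b * I0 + e * (1 - I0)))) (states n)"
proof -
  have "((\<lambda>x. a * (\<pi> x * (if R0 n x then sn n x else 0)) + c * (\<pi> x * (if R0 n x then 0 else sn n x))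
      + \<pi> x * (if R0 n x then b else e)) has_sum (a * BB + c * AA + (b * I0 + e * (1 - I0)))) (states n)"
    by (intro has_sum_add has_sum_cmult_right hs_A hs_B lin_const)
  then show ?thesis by (rule has_sum_cong_val) (auto simp: algebra_simps)
qed

definition "V2 = 2 * (1 - pp n k - (real n - 1) * pp n k) * BB + 2 * AA
   + ((pp n k * (real n - 1)^2 + 1 - pp n k) * I0 + 1 * (1 - I0))"
definition "V3 = 2 * (1 / real k - pp n k) * BB + (2 / real k) * AA
   + ((pp n k * (real n - 1) - pp n k + 1) * I0 + 1 * (1 - I0))"

lemma hs_s2: "((\<lambda>x. \<pi> x * (PP n k (\<lambda>y. sn n y ^ 2) x - sn n x ^ 2)) has_sum V2) (states n)"
  unfolding V2_def
  using lin_R0[of "2 * (1 - pp n k - (real n - 1) * pp n k)" "pp n k * (real n - 1)^2 + 1 - pp n k" 2 1]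
  by (rule has_sum_cong_val) (auto simp: drift_s2[OF kd n1, unfolded rn] algebra_simps)

lemma hs_Q: "((\<lambda>x. \<pi> x * (PP n k (Qn n) x - Qn n x)) has_sum V3) (states n)"
  unfolding V3_def
  using lin_R0[of "2 * (1 / real k - pp n k)" "pp n k * (real n - 1) - pp n k + 1" "2 / real k" 1]
  by (rule has_sum_cong_val) (auto simp: drift_Q[OF kd n1, unfolded rn] algebra_simps)

lemma exact_s2: "V2 = 0"
proof -
  define h where "h x = 2 * real (n - 1) * sn n x" for x
  have hsh: "((\<lambda>x. \<pi> x * h x) has_sum (2 * real (n - 1) * (BB + AA))) (states n)"
    unfolding h_def using has_sum_cmult_right[OF hs_s, of "2 * real (n - 1)"]
    by (rule has_sum_cong_val) (auto simp: algebra_simps)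
  have lim: "(\<lambda>m. \<Sum>x\<in>Lv n m. \<pi> x * (PP n k (\<lambda>y. sn n y ^ 2) x - sn n x ^ 2)) \<longlonglongrightarrow> V2"
    by (rule has_sum_seq[OF hs_s2 finite_Lv Lv_sub Lv_ev])
  have bnd: "\<bar>\<Sum>x\<in>Lv n m. \<pi> x * (PP n k (\<lambda>y. sn n y ^ 2) x - sn n x ^ 2)\<bar> \<le> infsum (\<lambda>x. \<pi> x * h x) (states n - Lv n m)" for m
  proof -
    have "\<bar>\<Sum>x\<in>Lv n m. \<pi> x * (PP n k (\<lambda>y. (\<lambda>t. real t ^ 2) (norm1 n y)) x - (\<lambda>t. real t ^ 2) (norm1 n x))\<bar>
        \<le> infsum (\<lambda>x. \<pi> x * h x) (states n - Lv n m)"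
    proof (rule cor_level)
      fix x assume x: "x \<in> states n" "R0 n x" "m < norm1 n x" "norm1 n (dec_all n x) \<le> m"
      define s where "s = sn n x"
      define sd where "sd = real (norm1 n (dec_all n x))"
      define D where "D = real (n - 1)"
      have e: "sd = s - D" unfolding sd_def s_def D_def using sn_dec[OF x(2)] unfolding sn_def .
      have sd0: "0 \<le> sd" unfolding sd_def by simp
      have sdm: "sd \<le> real m" unfolding sd_def using x(4) by simp
      have ms: "real m + 1 \<le> s" unfolding s_def sn_def using x(3) by simp
      have D0: "0 \<le> D" unfolding D_def by simp
      have a1: "sd ^ 2 \<le> (real m + 1) ^ 2" using sd0 sdm by (intro power_mono) auto
      have a2: "(real m + 1) ^ 2 \<le> s ^ 2" using ms by (intro power_mono) auto
      have "\<bar>sd ^ 2 - (real m + 1) ^ 2\<bar> = (real m + 1) ^ 2 - sd ^ 2" using a1 by simp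
      also have "\<dots> \<le> s ^ 2 - (s - D) ^ 2" using a2 e by simp
      also have "\<dots> = 2 * D * s - D ^ 2" by (simp add: power2_eq_square algebra_simps)
      also have "\<dots> \<le> 2 * D * s" by simp
      finally have b: "\<bar>sd ^ 2 - (real m + 1) ^ 2\<bar> \<le> 2 * D * s" .
      have "pp n k * \<bar>sd ^ 2 - (real m + 1) ^ 2\<bar> \<le> 1 * \<bar>sd ^ 2 - (real m + 1) ^ 2\<bar>"
        using pp_le1 by (intro mult_right_mono) auto
      also have "\<dots> \<le> 2 * D * s" using b by simp
      finally show "pp n k * \<bar>(\<lambda>t. real t ^ 2) (norm1 n (dec_all n x)) - (\<lambda>t. real t ^ 2) (m + 1)\<bar> \<le> h x"
        unfolding h_def sd_def s_def D_def by (simp add: add.commute)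
    next
      show "(\<lambda>x. \<pi> x * h x) summable_on states n" using hsh by (auto simp: summable_on_def)
    next
      fix x show "0 \<le> h x" unfolding h_def using sn_nonneg by simp
    qed
    then show ?thesis by (simp add: sn_def)
  qed
  show ?thesis by (rule limit_zero[OF lim tail0[OF hsh] bnd])
qed

lemma Q_ge: "0 \<le> V3"
proof (rule ineq_lim[OF _ hs_Q])
  fix m
  show "finite {x\<in>states n. Qn n x \<le> real m}"
  proof (rule finite_sub)
    fix x i assume a: "x \<in> states n" "Qn n x \<le> real m" "i < n - 1"
    show "real (x i) \<le> real m" using coord_le_Q[OF a(3), of x] a(2) by linarith
  qed
qed

lemma Q_le: "V3 \<le> 0"
proof -
  define G where "G = (\<lambda>y. 2 * sn n y ^ 2 + (-1) * Qn n y + 0)"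
  have dG: "PP n k G x - G x = 2 * (PP n k (\<lambda>y. sn n y ^ 2) x - sn n x ^ 2) - (PP n k (Qn n) x - Qn n x)" for x
    unfolding G_def PP_lin[OF kd] by (simp add: algebra_simps)
  have hs: "((\<lambda>x. \<pi> x * (PP n k G x - G x)) has_sum (2 * V2 - V3)) (states n)"
    using has_sum_diff'[OF has_sum_cmult_right[OF hs_s2, of 2] hs_Q]
    by (rule has_sum_cong_val) (auto simp: dG algebra_simps)
  have "0 \<le> 2 * V2 - V3"
  proof (rule ineq_lim[OF _ hs])
    fix m
    show "finite {x\<in>states n. G x \<le> real m}"
    proof (rule finite_sub)
      fix x i assume "x \<in> states n" "G x \<le> real m" "i < n - 1"
      then show "real (x i) \<le> real m"
        using coord_le_Q[of i n x] Q_le_s2[of n x] unfolding G_def by linarith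
    qed
  qed
  then show ?thesis using exact_s2 by simp
qed

lemma main: "((\<lambda>x. \<pi> x * real (norm1 n x)) has_sum (real k * (real n - 1) / (2 * (real k - real n)))) (states n)"
proof -
  have K: "real k > real n" using kn by simp
  have N: "real n \<ge> 3" using n3 by simp
  have V3: "V3 = 0" using Q_ge Q_le by simp
  have "AA + BB = real k * (real n - 1) / (2 * (real k - real n))"
  proof (rule alg_final[OF K N pp_eq exact_s])
    show "2 * (1 - pp n k - (real n - 1) * pp n k) * BB + (pp n k * (real n - 1)^2 + 1 - pp n k) * I0 + 2 * AA + (1 - I0) = 0"
      using exact_s2 unfolding V2_def by (simp add: algebra_simps)
    show "2 * (1 / real k - pp n k) * BB + (pp n k * (real n - 1) - pp n k + 1) * I0 + (2 / real k) * AA + (1 - I0) = 0"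
      using V3 unfolding V3_def by (simp add: algebra_simps)
  qed
  then show ?thesis using hs_s unfolding sn_def by (simp add: add.commute)
qed

end

theorem proposition6p1:
  fixes n k :: nat and \<pi> :: "(nat \<Rightarrow> nat) \<Rightarrow> real"
  assumes "3 \<le> n" and "n \<le> k"
    and "stable n k"
    and "stationary n k \<pi>"
  shows "((\<lambda>x. \<pi> x * real (norm1 n x)) has_sum
           (real k * (real n - 1) / (2 * (real k - real n)))) (states n)"
proof -
  interpret chain n k \<pi> using assms by unfold_locales auto
  have "n < k" using not_kn assms(2) by simp
  then interpret chain2 n k \<pi> by unfold_locales
  show ?thesis by (rule main)
qed


end
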